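(* Consider the masking noising process from $q_0$ on $[S]^d$, fix $T>0$, and let $(\overleftarrow x_t)_{t\in[0,T]}$ be its reverse process. Let $0\le\ell<t<T$, let $x_\ell$ satisfy $q_{T-\ell}(x_\ell)>0$, let $i\in m(x_\ell)$ and $c\in[S]$. Then $$\mathbb E_{x_t\sim\overleftarrow q_{t\mid\ell}(\cdot\mid x_\ell)}\Big[\big(s_{T-t}(x_\ell\odot_ic,x_\ell)-s_{T-t}(x_t\odot_ic,x_t)\big)\,\mathbb 1\{i\in m(x_t)\}\Big]=0.$$
   Context: Masking noising process on $([S]\cup\{\mathrm{MASK}\})^d$: CTMC with rate $Q(x,x\odot_i\mathrm{MASK})=1$ for each $i\notin m(x)$ and $0$ for other off-diagonal transitions, started from $q_0$ on $[S]^d$; $q_t$ its time-$t$ law; $s_t(y,x)=q_t(y)/q_t(x)$ (defined whenever $q_t(x)>0$). $m(x)=\{i:x^i=\mathrm{MASK}\}$; $x\odot_i c$ is $x$ with coordinate $i$ set to $c$. Reverse process on $[0,T]$: CTMC started from $q_T$ with rates $\overleftarrow Q_t(x,y)=Q(y,x)s_{T-t}(y,x)$, $x\ne y$, whose time-$t$ marginal is $q_{T-t}$; $\overleftarrow q_{t\mid\ell}(\cdot\mid x_\ell)$ is its conditional law at time $t$ given state $x_\ell$ at time $\ell$. *)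

theory Defs
  imports Complex_Main
begin

text \<open>States of the masking process: lists of length d over [S] \<union> {MASK},
  where [S] = {1..S} is encoded by Some c and MASK by None.\<close>

type_synonym mstate = "nat option list"

definition states :: "nat \<Rightarrow> nat \<Rightarrow> mstate set" where
  "states S d = {x. length x = d \<and> set x \<subseteq> insert None (Some ` {1..S})}"

definition clean_states :: "nat \<Rightarrow> nat \<Rightarrow> mstate set" where
  "clean_states S d = {x. length x = d \<and> set x \<subseteq> Some ` {1..S}}"

definition masked :: "mstate \<Rightarrow> nat set" where
  "masked x = {i. i < length x \<and> x ! i = None}"

definition mask_rate_off :: "mstate \<Rightarrow> mstate \<Rightarrow> real" where
  "mask_rate_off x y =
     (if x \<noteq> y \<and> (\<exists>i<length x. i \<notin> masked x \<and> y = x[i := None]) then 1 else 0)"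

definition mask_rate :: "nat \<Rightarrow> nat \<Rightarrow> mstate \<Rightarrow> mstate \<Rightarrow> real" where
  "mask_rate S d x y =
     (if x = y then - (\<Sum>z\<in>states S d - {x}. mask_rate_off x z) else mask_rate_off x y)"

fun mpow :: "'s set \<Rightarrow> ('s \<Rightarrow> 's \<Rightarrow> real) \<Rightarrow> nat \<Rightarrow> 's \<Rightarrow> 's \<Rightarrow> real" where
  "mpow X Q 0 x y = (if x = y then 1 else 0)"
| "mpow X Q (Suc n) x y = (\<Sum>z\<in>X. mpow X Q n x z * Q z y)"

definition ctmc_trans :: "'s set \<Rightarrow> ('s \<Rightarrow> 's \<Rightarrow> real) \<Rightarrow> real \<Rightarrow> 's \<Rightarrow> 's \<Rightarrow> real" where
  "ctmc_trans X Q t x y = (\<Sum>n. t ^ n / fact n * mpow X Q n x y)"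

definition fwd_law :: "nat \<Rightarrow> nat \<Rightarrow> (mstate \<Rightarrow> real) \<Rightarrow> real \<Rightarrow> mstate \<Rightarrow> real" where
  "fwd_law S d q0 t y = (\<Sum>x\<in>states S d. q0 x * ctmc_trans (states S d) (mask_rate S d) t x y)"

definition score :: "nat \<Rightarrow> nat \<Rightarrow> (mstate \<Rightarrow> real) \<Rightarrow> real \<Rightarrow> mstate \<Rightarrow> mstate \<Rightarrow> real" where
  "score S d q0 t y x = fwd_law S d q0 t y / fwd_law S d q0 t x"

definition rev_rate_off :: "nat \<Rightarrow> nat \<Rightarrow> (mstate \<Rightarrow> real) \<Rightarrow> real \<Rightarrow> real \<Rightarrow> mstate \<Rightarrow> mstate \<Rightarrow> real" where
  "rev_rate_off S d q0 T tau x y = mask_rate S d y x * score S d q0 (T - tau) y x"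

definition rev_rate :: "nat \<Rightarrow> nat \<Rightarrow> (mstate \<Rightarrow> real) \<Rightarrow> real \<Rightarrow> real \<Rightarrow> mstate \<Rightarrow> mstate \<Rightarrow> real" where
  "rev_rate S d q0 T tau x y =
     (if x = y then - (\<Sum>z\<in>states S d - {x}. rev_rate_off S d q0 T tau x z)
      else rev_rate_off S d q0 T tau x y)"

text \<open>p is the conditional law of the reverse process on [l, t] given state xl at time l:
  the solution of the Kolmogorov forward equation of the (time-inhomogeneous) reverse CTMC
  with initial condition the point mass at xl.\<close>
definition rev_cond_law ::
  "nat \<Rightarrow> nat \<Rightarrow> (mstate \<Rightarrow> real) \<Rightarrow> real \<Rightarrow> real \<Rightarrow> mstate \<Rightarrow> real \<Rightarrow> (real \<Rightarrow> mstate \<Rightarrow> real) \<Rightarrow> bool"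
where
  "rev_cond_law S d q0 T l xl t p \<longleftrightarrow>
     (\<forall>y\<in>states S d. p l y = (if y = xl then 1 else 0)) \<and>
     (\<forall>tau\<in>{l..t}. \<forall>y\<in>states S d.
        ((\<lambda>r. p r y) has_real_derivative
           (\<Sum>x\<in>states S d. p tau x * rev_rate S d q0 T tau x y)) (at tau within {l..t}))"

end

theory Submission
  imports Defs "HOL-Analysis.Analysis"
begin


lemma finite_states: "finite (states S d)"
proof -
  have "states S d \<subseteq> {xs. set xs \<subseteq> insert None (Some ` {1..S}) \<and> length xs = d}"
    unfolding states_def by auto
  moreover have "finite {xs. set xs \<subseteq> insert None (Some ` {1..S}) \<and> length xs = d}"
    by (rule finite_lists_length_eq) auto
  ultimately show ?thesis by (rule finite_subset)
qed

lemma clean_sub: "clean_states S d \<subseteq> states S d"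
  unfolding clean_states_def states_def by auto

lemma states_nth: "x \<in> states S d \<Longrightarrow> j < d \<Longrightarrow> x!j = None \<or> (\<exists>a\<in>{1..S}. x!j = Some a)"
proof -
  assume "x \<in> states S d" "j < d"
  then have "x!j \<in> insert None (Some ` {1..S})" unfolding states_def using nth_mem by blast
  then show ?thesis by blast
qed

lemma states_len: "x \<in> states S d \<Longrightarrow> length x = d"
  unfolding states_def by auto

lemma states_upd: "x \<in> states S d \<Longrightarrow> a \<in> {1..S} \<Longrightarrow> x[j := Some a] \<in> states S d"
proof -
  assume "x \<in> states S d" "a \<in> {1..S}"
  moreover have "set (x[j := Some a]) \<subseteq> insert (Some a) (set x)" by (rule set_update_subset_insert)
  ultimately show ?thesis unfolding states_def by auto
qed

lemma states_updN: "x \<in> states S d \<Longrightarrow> x[j := None] \<in> states S d"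
proof -
  assume "x \<in> states S d"
  moreover have "set (x[j := None]) \<subseteq> insert None (set x)" by (rule set_update_subset_insert)
  ultimately show ?thesis unfolding states_def by auto
qed

lemma masked_sub: "masked x \<subseteq> {..<length x}"
  unfolding masked_def by auto

lemma finite_masked: "finite (masked x)"
  using masked_sub finite_subset by blast

lemma inflow_off:
  assumes x: "x \<in> states S d"
  shows "(\<Sum>y\<in>states S d - {x}. mask_rate_off y x * h y) = (\<Sum>j\<in>masked x. \<Sum>a\<in>{1..S}. h (x[j := Some a]))"
proof -
  let ?f = "\<lambda>(j,a). x[j := Some a]"
  let ?A = "Sigma (masked x) (\<lambda>_. {1..S})"
  have inj: "inj_on ?f ?A"
  proof (rule inj_onI, clarsimp)
    fix j a j' b assume j: "j \<in> masked x" and j': "j' \<in> masked x"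
      and eq: "x[j := Some a] = x[j' := Some b]"
    have jl: "j < length x" "j' < length x" "x!j = None" "x!j' = None" using j j' unfolding masked_def by auto
    have "x[j := Some a] ! j = x[j' := Some b] ! j" using eq by simp
    then have 1: "j = j'" using jl by (cases "j = j'") auto
    show "j = j' \<and> a = b" using eq 1 jl
      by (metis nth_list_update_eq option.inject)
  qed
  have sub: "?f ` ?A \<subseteq> states S d - {x}"
  proof clarsimp
    fix j a assume j: "j \<in> masked x" and a: "Suc 0 \<le> a" "a \<le> S"
    show "x[j := Some a] \<in> states S d \<and> x[j := Some a] \<noteq> x"
    proof
      show "x[j := Some a] \<in> states S d" using states_upd[OF x, of a j] a by simp
      have "j < length x" "x!j = None" using j unfolding masked_def by auto
      then show "x[j := Some a] \<noteq> x" by (metis nth_list_update_eq option.distinct(1))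
    qed
  qed
  have zero: "\<forall>y\<in>(states S d - {x}) - ?f ` ?A. mask_rate_off y x * h y = 0"
  proof
    fix y assume y: "y \<in> (states S d - {x}) - ?f ` ?A"
    show "mask_rate_off y x * h y = 0"
    proof (rule ccontr)
      assume "mask_rate_off y x * h y \<noteq> 0"
      then have "mask_rate_off y x \<noteq> 0" by auto
      then obtain i where i: "i < length y" "i \<notin> masked y" "x = y[i := None]"
        unfolding mask_rate_off_def by (auto split: if_splits)
      have ys: "y \<in> states S d" using y by auto
      have ld: "length y = d" using ys states_len by auto
      obtain a where a: "a \<in> {1..S}" "y!i = Some a"
        using states_nth[OF ys, of i] i ld unfolding masked_def by auto
      have im: "i \<in> masked x" using i unfolding masked_def by auto
      have "y = x[i := Some a]" using i a by (auto intro!: nth_equalityI simp: nth_list_update)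
      then have "y \<in> ?f ` ?A" using im a by force
      then show False using y by auto
    qed
  qed
  have one: "\<And>y. y \<in> ?f ` ?A \<Longrightarrow> mask_rate_off y x = 1"
  proof clarsimp
    fix j a assume j: "j \<in> masked x" and a: "Suc 0 \<le> a" "a \<le> S"
    have jl: "j < length x" "x!j = None" using j unfolding masked_def by auto
    have ne: "x[j := Some a] \<noteq> x" using jl by (metis nth_list_update_eq option.distinct(1))
    have "j \<notin> masked (x[j := Some a])" using jl unfolding masked_def by auto
    moreover have "x = (x[j := Some a])[j := None]" using jl by (metis list_update_id list_update_overwrite)
    ultimately show "mask_rate_off (x[j := Some a]) x = 1"
      unfolding mask_rate_off_def using ne jl by auto
  qed
  have "(\<Sum>y\<in>states S d - {x}. mask_rate_off y x * h y) = (\<Sum>y\<in>?f ` ?A. mask_rate_off y x * h y)"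
    by (rule sum.mono_neutral_right[OF _ sub zero]) (simp add: finite_states)
  also have "\<dots> = (\<Sum>y\<in>?f ` ?A. h y)" using one by simp
  also have "\<dots> = (\<Sum>p\<in>?A. h (?f p))" by (rule sum.reindex_cong[OF inj refl]) simp
  also have "\<dots> = (\<Sum>j\<in>masked x. \<Sum>a\<in>{1..S}. h (x[j := Some a]))"
    by (simp add: sum.cartesian_product split_beta)
  finally show ?thesis .
qed


lemma card_unmasked:
  "card {j. j < length y \<and> y!j \<noteq> None} = length y - card (masked y)"
proof -
  let ?U = "{j. j < length y \<and> y!j \<noteq> None}"
  have "?U \<union> masked y = {..<length y}" "?U \<inter> masked y = {}" unfolding masked_def by auto
  then have "card ?U + card (masked y) = length y"
    by (metis card_Un_disjoint card_lessThan finite_Un finite_lessThan)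
  then show ?thesis by simp
qed

lemma outflow_count:
  assumes y: "y \<in> states S d"
  shows "(\<Sum>w\<in>states S d - {y}. mask_rate_off y w) = real (d - card (masked y))"
proof -
  let ?U = "{j. j < length y \<and> y!j \<noteq> None}"
  let ?f = "\<lambda>j. y[j := None]"
  have ly: "length y = d" using y states_len by auto
  have inj: "inj_on ?f ?U"
  proof (rule inj_onI)
    fix j j' assume j: "j \<in> ?U" and j': "j' \<in> ?U" and eq: "y[j := None] = y[j' := None]"
    show "j = j'"
    proof (rule ccontr)
      assume ne: "j \<noteq> j'"
      have "y[j := None] ! j = y[j' := None] ! j" using eq by simp
      then show False using ne j by simp
    qed
  qed
  have sub: "?f ` ?U \<subseteq> states S d - {y}"
  proof
    fix w assume "w \<in> ?f ` ?U"
    then obtain j where j: "j \<in> ?U" "w = y[j := None]" by auto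
    have "w ! j = None" using j by simp
    have "y ! j \<noteq> None" using j by simp
    then have "w \<noteq> y" using \<open>w ! j = None\<close> by auto
    then show "w \<in> states S d - {y}" using states_updN[OF y] j by auto
  qed
  have zero: "\<forall>w\<in>(states S d - {y}) - ?f ` ?U. mask_rate_off y w = 0"
  proof
    fix w assume w: "w \<in> (states S d - {y}) - ?f ` ?U"
    show "mask_rate_off y w = 0"
    proof (rule ccontr)
      assume "mask_rate_off y w \<noteq> 0"
      then obtain i where i: "i < length y" "i \<notin> masked y" "w = y[i := None]"
        unfolding mask_rate_off_def by (auto split: if_splits)
      then have "i \<in> ?U" unfolding masked_def by auto
      then show False using w i by auto
    qed
  qed
  have one: "\<And>w. w \<in> ?f ` ?U \<Longrightarrow> mask_rate_off y w = 1"
  proof -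
    fix w assume "w \<in> ?f ` ?U"
    then obtain j where j: "j \<in> ?U" "w = y[j := None]" by auto
    have "w ! j = None" using j by simp
    have "y ! j \<noteq> None" using j by simp
    then have "w \<noteq> y" using \<open>w ! j = None\<close> by auto
    moreover have "j \<notin> masked y" using j unfolding masked_def by auto
    ultimately show "mask_rate_off y w = 1" unfolding mask_rate_off_def using j by auto
  qed
  have "(\<Sum>w\<in>states S d - {y}. mask_rate_off y w) = (\<Sum>w\<in>?f ` ?U. mask_rate_off y w)"
    by (rule sum.mono_neutral_right[OF _ sub zero]) (simp add: finite_states)
  also have "\<dots> = (\<Sum>w\<in>?f ` ?U. 1)" using one by simp
  also have "\<dots> = real (card (?f ` ?U))" by simp
  also have "\<dots> = real (card ?U)" using card_image[OF inj] by simp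
  also have "\<dots> = real (d - card (masked y))" using card_unmasked[of y] ly by simp
  finally show ?thesis .
qed

lemma mask_rate_diag:
  "y \<in> states S d \<Longrightarrow> mask_rate S d y y = - real (d - card (masked y))"
  unfolding mask_rate_def using outflow_count by simp

lemma mask_rate_offd: "z \<noteq> y \<Longrightarrow> mask_rate S d z y = mask_rate_off z y"
  unfolding mask_rate_def by simp

lemma inflow:
  assumes y: "y \<in> states S d"
  shows "(\<Sum>z\<in>states S d. g z * mask_rate S d z y)
     = - real (d - card (masked y)) * g y + (\<Sum>j\<in>masked y. \<Sum>a\<in>{1..S}. g (y[j := Some a]))"
proof -
  have "(\<Sum>z\<in>states S d. g z * mask_rate S d z y)
      = g y * mask_rate S d y y + (\<Sum>z\<in>states S d - {y}. g z * mask_rate S d z y)"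
    using y by (simp add: sum.remove finite_states)
  also have "(\<Sum>z\<in>states S d - {y}. g z * mask_rate S d z y) = (\<Sum>z\<in>states S d - {y}. mask_rate_off z y * g z)"
    by (rule sum.cong) (auto simp: mask_rate_offd)
  also have "\<dots> = (\<Sum>j\<in>masked y. \<Sum>a\<in>{1..S}. g (y[j := Some a]))" by (rule inflow_off[OF y])
  finally show ?thesis using mask_rate_diag[OF y] by simp
qed



definition le_st :: "mstate \<Rightarrow> mstate \<Rightarrow> bool" where
  "le_st y x \<longleftrightarrow> length y = length x \<and> (\<forall>j<length x. y!j = None \<or> y!j = x!j)"

lemma le_st_upd:
  assumes j: "j \<in> masked y"
  shows "le_st (y[j := Some a]) x \<longleftrightarrow> le_st y x \<and> x!j = Some a"
proof -
  have jl: "j < length y" "y!j = None" using j unfolding masked_def by auto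
  show ?thesis
  proof
    assume L: "le_st (y[j := Some a]) x"
    then have len: "length y = length x" by (simp add: le_st_def)
    have "(y[j := Some a])!j = None \<or> (y[j := Some a])!j = x!j" using L jl len unfolding le_st_def by auto
    then have xa: "x!j = Some a" using jl by simp
    have "\<forall>p<length x. y!p = None \<or> y!p = x!p"
    proof (intro allI impI)
      fix p assume p: "p < length x"
      show "y!p = None \<or> y!p = x!p"
      proof (cases "p = j")
        case True then show ?thesis using jl by simp
      next
        case False
        then have "(y[j := Some a])!p = y!p" by simp
        then show ?thesis using L p unfolding le_st_def by metis
      qed
    qed
    then show "le_st y x \<and> x!j = Some a" using len xa unfolding le_st_def by simp
  next
    assume R: "le_st y x \<and> x!j = Some a"
    then have len: "length y = length x" by (simp add: le_st_def)
    have "\<forall>p<length x. (y[j := Some a])!p = None \<or> (y[j := Some a])!p = x!p"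
    proof (intro allI impI)
      fix p assume p: "p < length x"
      show "(y[j := Some a])!p = None \<or> (y[j := Some a])!p = x!p"
      proof (cases "p = j")
        case True then show ?thesis using jl R by simp
      next
        case False
        then have "(y[j := Some a])!p = y!p" by simp
        then show ?thesis using R p unfolding le_st_def by metis
      qed
    qed
    then show "le_st (y[j := Some a]) x" using len unfolding le_st_def by simp
  qed
qed

lemma masked_upd:
  assumes j: "j \<in> masked y"
  shows "masked (y[j := Some a]) = masked y - {j}"
  using j unfolding masked_def by (auto simp: nth_list_update split: if_splits)

lemma card_masked_upd:
  assumes j: "j \<in> masked y"
  shows "card (masked (y[j := Some a])) = card (masked y) - 1"
  using masked_upd[OF j] j finite_masked by simp

lemma clean_nth: "x \<in> clean_states S d \<Longrightarrow> j < d \<Longrightarrow> \<exists>a\<in>{1..S}. x!j = Some a"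
proof -
  assume "x \<in> clean_states S d" "j < d"
  then have "x!j \<in> Some ` {1..S}" unfolding clean_states_def using nth_mem by blast
  then show ?thesis by blast
qed

lemma sum_a:
  assumes x: "x \<in> clean_states S d" and y: "y \<in> states S d" and j: "j \<in> masked y"
  shows "(\<Sum>a\<in>{1..S}. if le_st (y[j := Some a]) x then v else 0) = (if le_st y x then v else (0::real))"
proof -
  have jd: "j < d" using j y states_len unfolding masked_def by auto
  obtain a0 where a0: "a0 \<in> {1..S}" "x!j = Some a0" using clean_nth[OF x jd] by blast
  have "(\<Sum>a\<in>{1..S}. if le_st (y[j := Some a]) x then v else 0)
      = (\<Sum>a\<in>{1..S}. if a0 = a then (if le_st y x then v else 0) else 0)"
    by (rule sum.cong) (auto simp: le_st_upd[OF j] a0)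
  also have "\<dots> = (if le_st y x then v else 0)" using a0 by (subst sum.delta') auto
  finally show ?thesis .
qed

definition mu :: "nat \<Rightarrow> nat \<Rightarrow> (mstate \<Rightarrow> real) \<Rightarrow> mstate \<Rightarrow> real" where
  "mu S d q0 y = (\<Sum>x\<in>clean_states S d. if le_st y x then q0 x else 0)"

lemma finite_clean: "finite (clean_states S d)"
  using clean_sub finite_states finite_subset by blast

lemma mu_marg:
  assumes y: "y \<in> states S d" and j: "j \<in> masked y"
  shows "(\<Sum>a\<in>{1..S}. mu S d q0 (y[j := Some a])) = mu S d q0 y"
proof -
  have "(\<Sum>a\<in>{1..S}. mu S d q0 (y[j := Some a]))
     = (\<Sum>x\<in>clean_states S d. \<Sum>a\<in>{1..S}. if le_st (y[j := Some a]) x then q0 x else 0)"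
    unfolding mu_def by (rule sum.swap)
  also have "\<dots> = mu S d q0 y" unfolding mu_def
    by (rule sum.cong[OF refl]) (rule sum_a[OF _ y j])
  finally show ?thesis .
qed

lemma mu_nonneg: "\<forall>x. q0 x \<ge> 0 \<Longrightarrow> mu S d q0 y \<ge> 0"
  unfolding mu_def by (intro sum_nonneg) auto

lemma mu_mono:
  assumes "\<forall>x. q0 x \<ge> 0" and j: "j \<in> masked y"
  shows "mu S d q0 (y[j := Some a]) \<le> mu S d q0 y"
  unfolding mu_def
  by (rule sum_mono) (use assms in \<open>auto simp: le_st_upd[OF j]\<close>)

definition cn :: "nat \<Rightarrow> nat \<Rightarrow> nat \<Rightarrow> real" where
  "cn d n k = (\<Sum>j\<le>k. real (k choose j) * (-1)^j * (-(real d - real k + real j))^n)"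

lemma aux_alg:
  assumes "s * B1 = k * B2"
  shows "s * (B1 * (-1)^(Suc j) * X) = - k * (B2 * (-1)^j * (X::real))"
proof -
  have "s * (B1 * (-1)^(Suc j) * X) = -(s * B1) * ((-1)^j * X)" by simp
  then show ?thesis using assms by simp
qed

lemma cn_rec:
  "cn d (Suc n) k = -(real d - real k) * cn d n k + real k * cn d n (k - 1)"
proof (cases k)
  case 0
  then show ?thesis unfolding cn_def by simp
next
  case (Suc k')
  have A: "cn d (Suc n) k = -(real d - real k) * cn d n k
      - (\<Sum>j\<le>k. real j * (real (k choose j) * (-1)^j * (-(real d - real k + real j))^n))"
    unfolding cn_def by (simp add: sum_distrib_left sum_subtractf[symmetric] algebra_simps)
  have "(\<Sum>j\<le>k. real j * (real (k choose j) * (-1)^j * (-(real d - real k + real j))^n))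
      = (\<Sum>j\<le>k'. real (Suc j) * (real (Suc k' choose Suc j) * (-1)^(Suc j) * (-(real d - real (Suc k') + real (Suc j)))^n))"
    unfolding Suc by (subst sum.atMost_Suc_shift) simp
  also have "\<dots> = (\<Sum>j\<le>k'. - real (Suc k') * (real (k' choose j) * (-1)^j * (-(real d - real k' + real j))^n))"
  proof (rule sum.cong[OF refl])
    fix j
    have b: "real (Suc j) * real (Suc k' choose Suc j) = real (Suc k') * real (k' choose j)"
      using Suc_times_binomial[of j k'] by (metis of_nat_mult)
    have e: "real d - real (Suc k') + real (Suc j) = real d - real k' + real j" by simp
    show "real (Suc j) * (real (Suc k' choose Suc j) * (-1)^(Suc j) * (-(real d - real (Suc k') + real (Suc j)))^n)
        = - real (Suc k') * (real (k' choose j) * (-1)^j * (-(real d - real k' + real j))^n)"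
      unfolding e by (rule aux_alg[OF b])
  qed
  also have "\<dots> = - real k * cn d n (k - 1)" unfolding cn_def Suc by (simp add: sum_distrib_left)
  finally show ?thesis using A by simp
qed

lemma cn_zero: "cn d 0 k = (if k = 0 then 1 else 0)"
proof -
  have "cn d 0 k = (\<Sum>j\<le>k. real (k choose j) * (-1)^j * 1^(k-j))" unfolding cn_def by simp
  also have "\<dots> = (-1 + 1)^k" by (rule binomial_ring[symmetric])
  finally show ?thesis by simp
qed



lemma clean_eq_iff:
  assumes x: "x \<in> clean_states S d" and y: "y \<in> states S d"
  shows "x = y \<longleftrightarrow> le_st y x \<and> card (masked y) = 0"
proof
  assume "x = y"
  moreover have "masked x = {}" using x unfolding clean_states_def masked_def
    using nth_mem by fastforce
  ultimately show "le_st y x \<and> card (masked y) = 0" unfolding le_st_def by simp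
next
  assume R: "le_st y x \<and> card (masked y) = 0"
  then have m: "masked y = {}" using finite_masked by auto
  have len: "length y = length x" using R unfolding le_st_def by simp
  show "x = y"
  proof (rule nth_equalityI)
    show "length x = length y" using len by simp
    fix p assume p: "p < length x"
    have "y!p \<noteq> None" using m p len unfolding masked_def by auto
    then show "x!p = y!p" using R p unfolding le_st_def by metis
  qed
qed

lemma card_masked_le: "y \<in> states S d \<Longrightarrow> card (masked y) \<le> d"
  using masked_sub[of y] states_len[of y S d] by (metis card_lessThan card_mono finite_lessThan)

lemma mpow_closed:
  assumes x: "x \<in> clean_states S d"
  shows "y \<in> states S d \<Longrightarrow> mpow (states S d) (mask_rate S d) n x y
          = (if le_st y x then cn d n (card (masked y)) else 0)"
proof (induction n arbitrary: y)
  case 0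
  show ?case using clean_eq_iff[OF x 0] by (auto simp: cn_zero)
next
  case (Suc n)
  let ?f = "\<lambda>z. if le_st z x then cn d n (card (masked z)) else 0"
  have "mpow (states S d) (mask_rate S d) (Suc n) x y
      = (\<Sum>z\<in>states S d. ?f z * mask_rate S d z y)"
    by (simp add: Suc.IH)
  also have "\<dots> = - real (d - card (masked y)) * ?f y
      + (\<Sum>j\<in>masked y. \<Sum>a\<in>{1..S}. ?f (y[j := Some a]))"
    by (rule inflow[OF Suc.prems])
  also have "(\<Sum>j\<in>masked y. \<Sum>a\<in>{1..S}. ?f (y[j := Some a]))
      = (\<Sum>j\<in>masked y. if le_st y x then cn d n (card (masked y) - 1) else 0)"
  proof (rule sum.cong[OF refl])
    fix j assume j: "j \<in> masked y"
    have "(\<Sum>a\<in>{1..S}. ?f (y[j := Some a]))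
        = (\<Sum>a\<in>{1..S}. if le_st (y[j := Some a]) x then cn d n (card (masked y) - 1) else 0)"
      by (rule sum.cong[OF refl]) (simp add: card_masked_upd[OF j])
    also have "\<dots> = (if le_st y x then cn d n (card (masked y) - 1) else 0)"
      by (rule sum_a[OF x Suc.prems j])
    finally show "(\<Sum>a\<in>{1..S}. ?f (y[j := Some a])) = (if le_st y x then cn d n (card (masked y) - 1) else 0)" .
  qed
  also have "\<dots> = real (card (masked y)) * (if le_st y x then cn d n (card (masked y) - 1) else 0)"
    by simp
  finally have E: "mpow (states S d) (mask_rate S d) (Suc n) x y =
     - real (d - card (masked y)) * ?f y + real (card (masked y)) * (if le_st y x then cn d n (card (masked y) - 1) else 0)" .
  have kd: "card (masked y) \<le> d" using card_masked_le[OF Suc.prems] .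
  show ?case
    using E cn_rec[of d n "card (masked y)"] kd by (simp add: of_nat_diff)
qed

lemma aux_alg2: "(u::real)^n / F * (C * s * X^n) = C * s * ((X * u)^n / F)"
  by (simp add: power_mult_distrib)

lemma exp_sum_closed:
  fixes u :: real
  assumes kd: "k \<le> d"
  shows "(\<Sum>n. u^n / fact n * cn d n k) = exp (-u) ^ (d - k) * (1 - exp (-u)) ^ k"
proof -
  define a where "a = (\<lambda>j. -(real d - real k + real j) * u)"
  have s: "(\<lambda>n. \<Sum>j\<le>k. real (k choose j) * (-1)^j * (a j ^ n / fact n))
        sums (\<Sum>j\<le>k. real (k choose j) * (-1)^j * exp (a j))"
  proof (rule sums_sum)
    fix j
    have "(\<lambda>n. a j ^ n /\<^sub>R fact n) sums exp (a j)" by (rule exp_converges)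
    then have "(\<lambda>n. a j ^ n / fact n) sums exp (a j)" by (simp add: divide_inverse_commute scaleR_conv_of_real)
    then show "(\<lambda>n. real (k choose j) * (-1)^j * (a j ^ n / fact n)) sums (real (k choose j) * (-1)^j * exp (a j))"
      by (rule sums_mult)
  qed
  have eq: "\<And>n. u^n / fact n * cn d n k = (\<Sum>j\<le>k. real (k choose j) * (-1)^j * (a j ^ n / fact n))"
    unfolding cn_def a_def sum_distrib_left by (rule sum.cong[OF refl]) (rule aux_alg2)
  have "(\<Sum>n. u^n / fact n * cn d n k) = (\<Sum>j\<le>k. real (k choose j) * (-1)^j * exp (a j))"
    unfolding eq using s by (rule sums_unique[symmetric])
  also have "\<dots> = (\<Sum>j\<le>k. exp (-u) ^ (d - k) * (real (k choose j) * (- exp (-u))^j * 1^(k-j)))"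
  proof (rule sum.cong[OF refl])
    fix j
    have "a j = real (d - k + j) * (-u)" unfolding a_def using kd by (simp add: of_nat_diff algebra_simps)
    then have "exp (a j) = exp (-u) ^ (d - k + j)" by (simp only: exp_of_nat_mult)
    also have "\<dots> = exp (-u) ^ (d - k) * exp (-u) ^ j" by (simp add: power_add)
    finally show "real (k choose j) * (-1)^j * exp (a j) = exp (-u) ^ (d - k) * (real (k choose j) * (- exp (-u))^j * 1^(k-j))"
      by (simp add: power_minus' algebra_simps)
  qed
  also have "\<dots> = exp (-u) ^ (d - k) * (- exp (-u) + 1) ^ k"
    by (simp only: binomial_ring sum_distrib_left)
  finally show ?thesis by simp
qed

lemma ctmc_closed:
  assumes x: "x \<in> clean_states S d" and y: "y \<in> states S d"
  shows "ctmc_trans (states S d) (mask_rate S d) u x y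
     = (if le_st y x then exp (-u) ^ (d - card (masked y)) * (1 - exp (-u)) ^ card (masked y) else 0)"
proof -
  have "ctmc_trans (states S d) (mask_rate S d) u x y
     = (\<Sum>n. u^n / fact n * (if le_st y x then cn d n (card (masked y)) else 0))"
    unfolding ctmc_trans_def using mpow_closed[OF x y] by simp
  then show ?thesis using exp_sum_closed[OF card_masked_le[OF y]] by (cases "le_st y x") auto
qed

lemma fwd_closed:
  assumes q0_supp: "\<forall>x. x \<notin> clean_states S d \<longrightarrow> q0 x = 0" and y: "y \<in> states S d"
  shows "fwd_law S d q0 u y = exp (-u) ^ (d - card (masked y)) * (1 - exp (-u)) ^ card (masked y) * mu S d q0 y"
proof -
  let ?P = "exp (-u) ^ (d - card (masked y)) * (1 - exp (-u)) ^ card (masked y)"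
  have "fwd_law S d q0 u y = (\<Sum>x\<in>clean_states S d. q0 x * ctmc_trans (states S d) (mask_rate S d) u x y)"
    unfolding fwd_law_def
    by (rule sum.mono_neutral_right) (use q0_supp clean_sub finite_states in auto)
  also have "\<dots> = (\<Sum>x\<in>clean_states S d. ?P * (if le_st y x then q0 x else 0))"
    by (rule sum.cong[OF refl]) (simp add: ctmc_closed[OF _ y])
  also have "\<dots> = ?P * mu S d q0 y" unfolding mu_def by (simp add: sum_distrib_left)
  finally show ?thesis .
qed



lemma revsum:
  assumes x: "x \<in> states S d"
  shows "(\<Sum>y\<in>states S d. rev_rate S d q0 T tau x y * h y)
       = (\<Sum>j\<in>masked x. \<Sum>a\<in>{1..S}. score S d q0 (T - tau) (x[j := Some a]) x * (h (x[j := Some a]) - h x))"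
proof -
  let ?R = "rev_rate S d q0 T tau"
  let ?Ro = "rev_rate_off S d q0 T tau"
  have "(\<Sum>y\<in>states S d. ?R x y * h y) = ?R x x * h x + (\<Sum>y\<in>states S d - {x}. ?R x y * h y)"
    using x by (simp add: sum.remove finite_states)
  also have "?R x x * h x = (\<Sum>y\<in>states S d - {x}. - ?Ro x y * h x)"
    unfolding rev_rate_def by (simp add: sum_distrib_right sum_negf)
  also have "(\<Sum>y\<in>states S d - {x}. ?R x y * h y) = (\<Sum>y\<in>states S d - {x}. ?Ro x y * h y)"
    unfolding rev_rate_def by (rule sum.cong) auto
  also have "(\<Sum>y\<in>states S d - {x}. - ?Ro x y * h x) + (\<Sum>y\<in>states S d - {x}. ?Ro x y * h y)
      = (\<Sum>y\<in>states S d - {x}. ?Ro x y * (h y - h x))"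
    by (simp add: sum.distrib[symmetric] algebra_simps)
  also have "\<dots> = (\<Sum>y\<in>states S d - {x}. mask_rate_off y x * (score S d q0 (T - tau) y x * (h y - h x)))"
    unfolding rev_rate_off_def by (rule sum.cong) (auto simp: mask_rate_offd)
  also have "\<dots> = (\<Sum>j\<in>masked x. \<Sum>a\<in>{1..S}. score S d q0 (T - tau) (x[j := Some a]) x * (h (x[j := Some a]) - h x))"
    by (rule inflow_off[OF x])
  finally show ?thesis .
qed

lemma score_formula:
  assumes q0_supp: "\<forall>x. x \<notin> clean_states S d \<longrightarrow> q0 x = 0"
    and x: "x \<in> states S d" and j: "j \<in> masked x" and a: "a \<in> {1..S}" and u: "u > 0"
  shows "score S d q0 u (x[j := Some a]) x
       = exp (-u) / (1 - exp (-u)) * (mu S d q0 (x[j := Some a]) / mu S d q0 x)"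
proof -
  define E where "E = exp (-u)"
  have E1: "E < 1" "E > 0" unfolding E_def using u by auto
  define k where "k = card (masked x)"
  have k1: "k \<ge> 1" unfolding k_def using j finite_masked
    by (metis One_nat_def Suc_leI card_gt_0_iff empty_iff)
  have kd: "k \<le> d" unfolding k_def using card_masked_le[OF x] .
  have xs: "x[j := Some a] \<in> states S d" using states_upd[OF x a] .
  have ck: "card (masked (x[j := Some a])) = k - 1" unfolding k_def by (rule card_masked_upd[OF j])
  define P where "P = E ^ (d - k) * (1 - E) ^ (k - 1)"
  have Ppos: "P > 0" unfolding P_def using E1 by simp
  have e1: "d - (k - 1) = Suc (d - k)" using k1 kd by simp
  have e2: "k = Suc (k - 1)" using k1 by simp
  have q1: "fwd_law S d q0 u (x[j := Some a]) = P * E * mu S d q0 (x[j := Some a])"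
    using fwd_closed[OF q0_supp xs, of u] unfolding ck e1 P_def E_def by (simp add: algebra_simps)
  have q2: "fwd_law S d q0 u x = P * (1 - E) * mu S d q0 x"
    using fwd_closed[OF q0_supp x, of u] unfolding P_def E_def k_def[symmetric]
    by (subst (asm) (2) e2) (simp add: algebra_simps)
  show ?thesis unfolding score_def q1 q2 E_def[symmetric]
    using Ppos E1 by (cases "mu S d q0 x = 0") (auto simp: field_simps)
qed

lemma fwd_pos_mu:
  assumes q0_supp: "\<forall>x. x \<notin> clean_states S d \<longrightarrow> q0 x = 0"
    and x: "x \<in> states S d" and "fwd_law S d q0 u x > 0"
  shows "mu S d q0 x \<noteq> 0"
  using assms fwd_closed[OF q0_supp x, of u] by auto



definition pif :: "nat \<Rightarrow> nat \<Rightarrow> (mstate \<Rightarrow> real) \<Rightarrow> nat \<Rightarrow> nat \<Rightarrow> mstate \<Rightarrow> real" where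
  "pif S d q0 i c x = mu S d q0 (x[i := Some c]) / mu S d q0 x"

definition gT :: "real \<Rightarrow> real \<Rightarrow> real \<Rightarrow> real" where
  "gT T t r = exp (t - T) / (1 - exp (r - T))"

definition phi :: "nat \<Rightarrow> nat \<Rightarrow> (mstate \<Rightarrow> real) \<Rightarrow> real \<Rightarrow> real \<Rightarrow> nat \<Rightarrow> nat \<Rightarrow> mstate \<Rightarrow> real \<Rightarrow> real \<Rightarrow> mstate \<Rightarrow> real" where
  "phi S d q0 T t i c xl A r x = (if i \<notin> masked x then 0 else if mu S d q0 x = 0 then A
      else gT T t r * (pif S d q0 i c xl - pif S d q0 i c x))"

lemma masked_upd_other:
  assumes "j \<in> masked x" "j \<noteq> i"
  shows "i \<in> masked (x[j := Some a]) \<longleftrightarrow> i \<in> masked x"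
  using masked_upd[OF assms(1)] assms(2) by auto

lemma bsum_unmasked:
  assumes x: "x \<in> states S d" and i: "i \<notin> masked x"
  shows "(\<Sum>y\<in>states S d. rev_rate S d q0 T tau x y * phi S d q0 T t i c xl A tau y) = 0"
proof -
  have "(\<Sum>y\<in>states S d. rev_rate S d q0 T tau x y * phi S d q0 T t i c xl A tau y)
     = (\<Sum>j\<in>masked x. \<Sum>a\<in>{1..S}. score S d q0 (T - tau) (x[j := Some a]) x *
          (phi S d q0 T t i c xl A tau (x[j := Some a]) - phi S d q0 T t i c xl A tau x))"
    by (rule revsum[OF x])
  also have "\<dots> = 0"
  proof (rule sum.neutral, rule ballI, rule sum.neutral, rule ballI)
    fix j a assume j: "j \<in> masked x"
    have "j \<noteq> i" using i j by auto
    then have "i \<notin> masked (x[j := Some a])" using masked_upd_other[OF j] i by simp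
    then show "score S d q0 (T - tau) (x[j := Some a]) x *
          (phi S d q0 T t i c xl A tau (x[j := Some a]) - phi S d q0 T t i c xl A tau x) = 0"
      using i unfolding phi_def by simp
  qed
  finally show ?thesis .
qed

lemma bsum_mu0:
  assumes q0_supp: "\<forall>x. x \<notin> clean_states S d \<longrightarrow> q0 x = 0"
    and x: "x \<in> states S d" and m: "mu S d q0 x = 0" and tau: "tau < T"
  shows "(\<Sum>y\<in>states S d. rev_rate S d q0 T tau x y * h y) = 0"
proof -
  have "(\<Sum>y\<in>states S d. rev_rate S d q0 T tau x y * h y)
     = (\<Sum>j\<in>masked x. \<Sum>a\<in>{1..S}. score S d q0 (T - tau) (x[j := Some a]) x * (h (x[j := Some a]) - h x))"
    by (rule revsum[OF x])
  also have "\<dots> = 0"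
  proof (rule sum.neutral, rule ballI, rule sum.neutral, rule ballI)
    fix j a assume j: "j \<in> masked x" and a: "a \<in> {1..S}"
    show "score S d q0 (T - tau) (x[j := Some a]) x * (h (x[j := Some a]) - h x) = 0"
      using score_formula[OF q0_supp x j a, of "T - tau"] tau m by simp
  qed
  finally show ?thesis .
qed



lemma aux3:
  fixes s K m Mx D g Z :: real
  assumes "s = K * (m / Mx)" "m * D = g * Z"
  shows "s * D = (K / Mx * g) * Z"
proof -
  have "s * D = K / Mx * (m * D)" using assms(1) by simp
  also have "\<dots> = K / Mx * (g * Z)" using assms(2) by simp
  finally show ?thesis by simp
qed

lemma bsum_pos:
  assumes q0_nonneg: "\<forall>x. q0 x \<ge> 0"
    and q0_supp: "\<forall>x. x \<notin> clean_states S d \<longrightarrow> q0 x = 0"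
    and x: "x \<in> states S d" and i: "i \<in> masked x" and m: "mu S d q0 x \<noteq> 0"
    and tau: "tau < T" and c: "c \<in> {1..S}"
  shows "(\<Sum>y\<in>states S d. rev_rate S d q0 T tau x y * phi S d q0 T t i c xl A tau y)
       = - (exp (tau - T) / (1 - exp (tau - T))) * phi S d q0 T t i c xl A tau x"
proof -
  define K where "K = exp (tau - T) / (1 - exp (tau - T))"
  define ph where "ph = phi S d q0 T t i c xl A tau"
  define g where "g = gT T t tau"
  define M where "M = mu S d q0"
  have u: "T - tau > 0" using tau by simp
  have em: "exp (- (T - tau)) = exp (tau - T)" by simp
  have sc: "\<And>j a. j \<in> masked x \<Longrightarrow> a \<in> {1..S} \<Longrightarrow>
      score S d q0 (T - tau) (x[j := Some a]) x = K * (M (x[j := Some a]) / M x)"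
    using score_formula[OF q0_supp x _ _ u] unfolding K_def M_def em by simp
  have phx: "ph x = g * (pif S d q0 i c xl - pif S d q0 i c x)"
    unfolding ph_def phi_def g_def using i m by simp
  have M0: "\<And>y. M y \<ge> 0" unfolding M_def using mu_nonneg[OF q0_nonneg] .
  have xi: "x[i := Some c] \<in> states S d" using states_upd[OF x c] .
  have pim: "pif S d q0 i c x * M x = M (x[i := Some c])" unfolding pif_def M_def using m by simp
  have Ti: "(\<Sum>a\<in>{1..S}. score S d q0 (T - tau) (x[i := Some a]) x * (ph (x[i := Some a]) - ph x)) = - K * ph x"
  proof -
    have "(\<Sum>a\<in>{1..S}. score S d q0 (T - tau) (x[i := Some a]) x * (ph (x[i := Some a]) - ph x))
        = (\<Sum>a\<in>{1..S}. (- K * ph x / M x) * M (x[i := Some a]))"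
    proof (rule sum.cong[OF refl])
      fix a assume a: "a \<in> {1..S}"
      have "i \<notin> masked (x[i := Some a])" using masked_upd[OF i] by simp
      then have "ph (x[i := Some a]) = 0" unfolding ph_def phi_def by simp
      then show "score S d q0 (T - tau) (x[i := Some a]) x * (ph (x[i := Some a]) - ph x) = (- K * ph x / M x) * M (x[i := Some a])"
        using sc[OF i a] by simp
    qed
    also have "\<dots> = (- K * ph x / M x) * M x"
      using mu_marg[OF x i, of q0] unfolding M_def by (simp only: sum_distrib_left[symmetric])
    also have "\<dots> = - K * ph x" using m unfolding M_def by simp
    finally show ?thesis .
  qed
  have Tj: "(\<Sum>a\<in>{1..S}. score S d q0 (T - tau) (x[j := Some a]) x * (ph (x[j := Some a]) - ph x)) = 0"
    if j: "j \<in> masked x" "j \<noteq> i" for j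
  proof -
    have jxi: "j \<in> masked (x[i := Some c])" using masked_upd[OF i] j by simp
    have trm: "M (x[j := Some a]) * (ph (x[j := Some a]) - ph x)
        = g * (M (x[j := Some a]) * pif S d q0 i c x - M ((x[i := Some c])[j := Some a]))"
      if a: "a \<in> {1..S}" for a
    proof -
      have sw: "(x[i := Some c])[j := Some a] = (x[j := Some a])[i := Some c]"
        using j(2) by (simp add: list_update_swap)
      have ij: "i \<in> masked (x[j := Some a])" using masked_upd_other[OF j(1) j(2)] i by simp
      show ?thesis
      proof (cases "M (x[j := Some a]) = 0")
        case True
        have "M ((x[j := Some a])[i := Some c]) \<le> M (x[j := Some a])"
          unfolding M_def by (rule mu_mono[OF q0_nonneg ij])
        then have "M ((x[j := Some a])[i := Some c]) = 0" using True M0[of "(x[j := Some a])[i := Some c]"] by simp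
        then show ?thesis using True sw by simp
      next
        case False
        have e1: "ph (x[j := Some a]) = g * (pif S d q0 i c xl - pif S d q0 i c (x[j := Some a]))"
          unfolding ph_def phi_def g_def using ij False unfolding M_def by simp
        have e2: "M (x[j := Some a]) * pif S d q0 i c (x[j := Some a]) = M ((x[i := Some c])[j := Some a])"
          unfolding pif_def M_def using False sw unfolding M_def by simp
        have "M (x[j := Some a]) * (ph (x[j := Some a]) - ph x)
            = g * (M (x[j := Some a]) * pif S d q0 i c x - M (x[j := Some a]) * pif S d q0 i c (x[j := Some a]))"
          unfolding e1 phx by (simp add: algebra_simps)
        then show ?thesis unfolding e2 .
      qed
    qed
    have "(\<Sum>a\<in>{1..S}. score S d q0 (T - tau) (x[j := Some a]) x * (ph (x[j := Some a]) - ph x))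
        = (\<Sum>a\<in>{1..S}. (K / M x * g) * (M (x[j := Some a]) * pif S d q0 i c x - M ((x[i := Some c])[j := Some a])))"
    proof (rule sum.cong[OF refl])
      fix a assume a: "a \<in> {1..S}"
      show "score S d q0 (T - tau) (x[j := Some a]) x * (ph (x[j := Some a]) - ph x)
          = (K / M x * g) * (M (x[j := Some a]) * pif S d q0 i c x - M ((x[i := Some c])[j := Some a]))"
        by (rule aux3[OF sc[OF j(1) a] trm[OF a]])
    qed
    also have "\<dots> = (K / M x * g) * ((\<Sum>a\<in>{1..S}. M (x[j := Some a])) * pif S d q0 i c x
                  - (\<Sum>a\<in>{1..S}. M ((x[i := Some c])[j := Some a])))"
      by (simp only: sum_distrib_left[symmetric] sum_distrib_right[symmetric] sum_subtractf)
    also have "\<dots> = (K / M x * g) * (M x * pif S d q0 i c x - M (x[i := Some c]))"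
      using mu_marg[OF x j(1)] mu_marg[OF xi jxi] unfolding M_def by simp
    also have "\<dots> = 0" using pim by (simp add: mult.commute)
    finally show ?thesis .
  qed
  have "(\<Sum>y\<in>states S d. rev_rate S d q0 T tau x y * ph y)
     = (\<Sum>j\<in>masked x. \<Sum>a\<in>{1..S}. score S d q0 (T - tau) (x[j := Some a]) x * (ph (x[j := Some a]) - ph x))"
    by (rule revsum[OF x])
  also have "\<dots> = (\<Sum>a\<in>{1..S}. score S d q0 (T - tau) (x[i := Some a]) x * (ph (x[i := Some a]) - ph x))
      + (\<Sum>j\<in>masked x - {i}. \<Sum>a\<in>{1..S}. score S d q0 (T - tau) (x[j := Some a]) x * (ph (x[j := Some a]) - ph x))"
    using i finite_masked by (simp add: sum.remove)
  also have "(\<Sum>j\<in>masked x - {i}. \<Sum>a\<in>{1..S}. score S d q0 (T - tau) (x[j := Some a]) x * (ph (x[j := Some a]) - ph x)) = 0"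
    by (rule sum.neutral) (use Tj in auto)
  finally show ?thesis using Ti unfolding K_def ph_def by simp
qed



lemma gT_deriv:
  assumes tau: "tau < T"
  shows "((\<lambda>r. gT T t r) has_real_derivative
           (exp (tau - T) / (1 - exp (tau - T))) * gT T t tau) (at tau within W)"
proof -
  have e: "exp (tau - T) < 1" using tau by simp
  have "((\<lambda>r. exp (t - T) / (1 - exp (r - T))) has_real_derivative
         exp (t - T) * exp (tau - T) / (1 - exp (tau - T))^2) (at tau)"
    using e by (auto intro!: derivative_eq_intros simp: power2_eq_square field_simps)
  moreover have "exp (t - T) * exp (tau - T) / (1 - exp (tau - T))^2
       = (exp (tau - T) / (1 - exp (tau - T))) * gT T t tau"
    unfolding gT_def by (simp add: power2_eq_square)
  ultimately show ?thesis unfolding gT_def[abs_def]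
    by (metis has_field_derivative_at_within)
qed

lemma phi_deriv:
  assumes q0_nonneg: "\<forall>x. q0 x \<ge> 0"
    and q0_supp: "\<forall>x. x \<notin> clean_states S d \<longrightarrow> q0 x = 0"
    and x: "x \<in> states S d" and tau: "tau < T" and c: "c \<in> {1..S}"
  shows "((\<lambda>r. phi S d q0 T t i c xl A r x) has_real_derivative
     (- (\<Sum>y\<in>states S d. rev_rate S d q0 T tau x y * phi S d q0 T t i c xl A tau y))) (at tau within W)"
proof (cases "i \<in> masked x")
  case False
  have "(\<lambda>r. phi S d q0 T t i c xl A r x) = (\<lambda>r. 0)" unfolding phi_def using False by simp
  then show ?thesis using bsum_unmasked[OF x False] by simp
next
  case i: True
  show ?thesis
  proof (cases "mu S d q0 x = 0")
    case True
    have "(\<lambda>r. phi S d q0 T t i c xl A r x) = (\<lambda>r. A)" unfolding phi_def using True i by simp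
    then show ?thesis using bsum_mu0[OF q0_supp x True tau] by simp
  next
    case False
    define D where "D = pif S d q0 i c xl - pif S d q0 i c x"
    have f: "(\<lambda>r. phi S d q0 T t i c xl A r x) = (\<lambda>r. gT T t r * D)"
      unfolding phi_def D_def using False i by simp
    have "((\<lambda>r. gT T t r * D) has_real_derivative
           ((exp (tau - T) / (1 - exp (tau - T))) * gT T t tau) * D) (at tau within W)"
      by (rule DERIV_cmult_right[OF gT_deriv[OF tau]])
    moreover have "- (\<Sum>y\<in>states S d. rev_rate S d q0 T tau x y * phi S d q0 T t i c xl A tau y)
        = ((exp (tau - T) / (1 - exp (tau - T))) * gT T t tau) * D"
      using bsum_pos[OF q0_nonneg q0_supp x i False tau c, of t xl A]
      unfolding phi_def D_def using i False by simp
    ultimately show ?thesis unfolding f by simp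
  qed
qed



theorem mainTheorem19:
  fixes S d :: nat and q0 :: "mstate \<Rightarrow> real" and T l t :: real
    and xl :: mstate and i c :: nat and p :: "real \<Rightarrow> mstate \<Rightarrow> real"
  assumes q0_nonneg: "\<forall>x. q0 x \<ge> 0"
    and q0_supp: "\<forall>x. x \<notin> clean_states S d \<longrightarrow> q0 x = 0"
    and q0_sum: "(\<Sum>x\<in>clean_states S d. q0 x) = 1"
    and T_pos: "T > 0"
    and times: "0 \<le> l" "l < t" "t < T"
    and xl_state: "xl \<in> states S d"
    and xl_pos: "fwd_law S d q0 (T - l) xl > 0"
    and i_masked: "i \<in> masked xl"
    and c_range: "c \<in> {1..S}"
    and p_law: "rev_cond_law S d q0 T l xl t p"
  shows "(\<Sum>x\<in>states S d. p t x *
            ((score S d q0 (T - t) (xl[i := Some c]) xl - score S d q0 (T - t) (x[i := Some c]) x)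
             * (if i \<in> masked x then 1 else 0))) = 0"
proof -
  define A where "A = score S d q0 (T - t) (xl[i := Some c]) xl"
  define ph where "ph = phi S d q0 T t i c xl A"
  define F where "F = (\<lambda>r. \<Sum>x\<in>states S d. p r x * ph r x)"
  let ?R = "rev_rate S d q0 T"
  have p0: "\<forall>y\<in>states S d. p l y = (if y = xl then 1 else 0)"
    and pd: "\<forall>tau\<in>{l..t}. \<forall>y\<in>states S d.
        ((\<lambda>r. p r y) has_real_derivative (\<Sum>x\<in>states S d. p tau x * ?R tau x y)) (at tau within {l..t})"
    using p_law unfolding rev_cond_law_def by auto
  have dF: "(F has_real_derivative 0) (at tau within {l..t})" if tau: "tau \<in> {l..t}" for tau
  proof -
    have tT: "tau < T" using tau times by auto
    have "(F has_real_derivative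
        (\<Sum>y\<in>states S d. (\<Sum>x\<in>states S d. p tau x * ?R tau x y) * ph tau y
            + (- (\<Sum>z\<in>states S d. ?R tau y z * ph tau z)) * p tau y)) (at tau within {l..t})"
      unfolding F_def
    proof (rule DERIV_sum, rule DERIV_mult)
      fix y assume y: "y \<in> states S d"
      show "((\<lambda>r. p r y) has_real_derivative (\<Sum>x\<in>states S d. p tau x * ?R tau x y)) (at tau within {l..t})"
        using pd tau y by auto
      show "((\<lambda>r. ph r y) has_real_derivative (- (\<Sum>z\<in>states S d. ?R tau y z * ph tau z))) (at tau within {l..t})"
        unfolding ph_def by (rule phi_deriv[OF q0_nonneg q0_supp y tT c_range])
    qed
    moreover have "(\<Sum>y\<in>states S d. (\<Sum>x\<in>states S d. p tau x * ?R tau x y) * ph tau y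
            + (- (\<Sum>z\<in>states S d. ?R tau y z * ph tau z)) * p tau y) = 0"
    proof -
      have "(\<Sum>y\<in>states S d. (\<Sum>x\<in>states S d. p tau x * ?R tau x y) * ph tau y)
          = (\<Sum>y\<in>states S d. \<Sum>x\<in>states S d. p tau x * ?R tau x y * ph tau y)"
        by (simp add: sum_distrib_right)
      also have "\<dots> = (\<Sum>x\<in>states S d. \<Sum>y\<in>states S d. p tau x * ?R tau x y * ph tau y)"
        by (rule sum.swap)
      also have "\<dots> = (\<Sum>x\<in>states S d. p tau x * (\<Sum>y\<in>states S d. ?R tau x y * ph tau y))"
        by (simp add: sum_distrib_left mult.assoc)
      finally have e: "(\<Sum>y\<in>states S d. (\<Sum>x\<in>states S d. p tau x * ?R tau x y) * ph tau y)
          = (\<Sum>x\<in>states S d. p tau x * (\<Sum>y\<in>states S d. ?R tau x y * ph tau y))" .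
      have "(\<Sum>y\<in>states S d. (\<Sum>x\<in>states S d. p tau x * ?R tau x y) * ph tau y
            + (- (\<Sum>z\<in>states S d. ?R tau y z * ph tau z)) * p tau y)
          = (\<Sum>y\<in>states S d. (\<Sum>x\<in>states S d. p tau x * ?R tau x y) * ph tau y)
            - (\<Sum>y\<in>states S d. p tau y * (\<Sum>z\<in>states S d. ?R tau y z * ph tau z))"
        by (simp add: sum.distrib sum_subtractf[symmetric] algebra_simps)
      then show ?thesis using e by simp
    qed
    ultimately show ?thesis by simp
  qed
  obtain C where C: "\<forall>r\<in>{l..t}. F r = C"
    using has_field_derivative_zero_constant[of "{l..t}" F] dF by auto
  have Ftl: "F t = F l" using C times by auto
  have mxl: "mu S d q0 xl \<noteq> 0" by (rule fwd_pos_mu[OF q0_supp xl_state xl_pos])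
  have Fl: "F l = 0"
  proof -
    have "F l = (\<Sum>x\<in>states S d. (if x = xl then ph l x else 0))"
      unfolding F_def by (rule sum.cong[OF refl]) (use p0 in auto)
    also have "\<dots> = ph l xl" using xl_state by (simp add: finite_states)
    also have "\<dots> = 0" unfolding ph_def phi_def using i_masked mxl by simp
    finally show ?thesis .
  qed
  have ut: "T - t > 0" using times by simp
  have em: "exp (- (T - t)) = exp (t - T)" by simp
  have Aeq: "A = exp (t - T) / (1 - exp (t - T)) * pif S d q0 i c xl"
    unfolding A_def pif_def using score_formula[OF q0_supp xl_state i_masked c_range ut] em by simp
  have pt: "ph t x = (A - score S d q0 (T - t) (x[i := Some c]) x) * (if i \<in> masked x then 1 else 0)"
    if x: "x \<in> states S d" for x
  proof (cases "i \<in> masked x")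
    case False then show ?thesis unfolding ph_def phi_def by simp
  next
    case i: True
    have sx: "score S d q0 (T - t) (x[i := Some c]) x = exp (t - T) / (1 - exp (t - T)) * pif S d q0 i c x"
      unfolding pif_def using score_formula[OF q0_supp x i c_range ut] em by simp
    show ?thesis
    proof (cases "mu S d q0 x = 0")
      case True then show ?thesis unfolding ph_def phi_def sx pif_def using i by simp
    next
      case False then show ?thesis unfolding ph_def phi_def sx Aeq gT_def using i
        by (simp add: algebra_simps)
    qed
  qed
  have "F t = (\<Sum>x\<in>states S d. p t x *
            ((score S d q0 (T - t) (xl[i := Some c]) xl - score S d q0 (T - t) (x[i := Some c]) x)
             * (if i \<in> masked x then 1 else 0)))"
    unfolding F_def by (rule sum.cong[OF refl]) (simp add: pt A_def)
  then show ?thesis using Ftl Fl by simp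
qed


end
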